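(* Fix $E^2=\operatorname{diag}(\lambda_1,\lambda_2,\lambda_3)$ with $\lambda_i>0$ and $E^1=0$, and let $a=\frac{\partial E^3_{111}}{\partial E^1_1}$, $b=\frac{\partial E^3_{112}}{\partial E^1_2}$, $c=\frac{\partial E^3_{113}}{\partial E^1_3}$, $d=\frac{\partial E^3_{122}}{\partial E^1_1}$, all evaluated at $E^1=0$. Let $J_x\in\mathbb{R}^{9\times9}$ be the matrix whose only nonzero entries are $(J_x)_{1,2}=(J_x)_{2,5}=(J_x)_{3,6}=(J_x)_{4,7}=1$, $(J_x)_{5,2}=a$, $(J_x)_{6,3}=b$, $(J_x)_{7,4}=c$, $(J_x)_{8,2}=d$ (this is the Jacobian of the $x$-flux $f_x=(E^1_1,E^2_{11},E^2_{12},E^2_{13},E^3_{111},E^3_{112},E^3_{113},E^3_{122},E^3_{123})$ with respect to $E=(E^0,E^1_1,E^1_2,E^1_3,E^2_{11},E^2_{12},E^2_{13},E^2_{22},E^2_{23})$ at this state). Then $J_x$ is real diagonalizable if and only if $\sigma_1>0$, equivalently if and only if $3\lambda_1^2+\lambda_1(\lambda_2+\lambda_3)-\lambda_2\lambda_3>0$.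
   Context: With $R_i=e_i$ and $F_i=E^1_i$: for $x,y>0$, $g(x,y;a',b')=\dfrac{2(x-a'^2/x)(y-b'^2/y)(x-a'^2/x+y-b'^2/y)}{3(x+y)^2}$; for $\{i,j,k\}=\{1,2,3\}$, $\sigma_i=\lambda_i-g(\lambda_i,\lambda_j;F_i,F_j)-g(\lambda_i,\lambda_k;F_i,F_k)$, $w_i=\sigma_i+2g(\lambda_j,\lambda_k;F_j,F_k)$; $\sigma_1$ in the claim is evaluated at $E^1=0$. With $\tau_l=\dfrac{\sigma_l^2+2F_l^2-3w_l\sigma_l}{2F_l^2-w_l\sigma_l-w_l^2}$, the 3D $B_2$ third-order closure is $E^3_{lll}=F_l\tau_l$, $E^3_{ijk}=\frac{F_l}{2}(1-\tau_l)$ when $(i,j,k)$ is a permutation of $(l,m,m)$ with $m\ne l$, and $E^3_{123}=0$; the derivatives $a,b,c,d$ are taken with respect to $E^1$ with $E^0,E^2$ (hence $R_i=e_i$) fixed. *)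

theory Defs
  imports Complex_Main "Jordan_Normal_Form.Matrix"
begin

(* Indices 1,2,3.  lam i = \<lambda>_i (E^2 = diag(lam 1, lam 2, lam 3)),
   F i = F_i = E^1_i. *)

definition gfun :: "real \<Rightarrow> real \<Rightarrow> real \<Rightarrow> real \<Rightarrow> real" where
  "gfun x y a' b' =
     2 * (x - a'^2 / x) * (y - b'^2 / y) * (x - a'^2 / x + y - b'^2 / y) / (3 * (x + y)^2)"

(* the two indices j, k with {i,j,k} = {1,2,3} *)
definition oth1 :: "nat \<Rightarrow> nat" where
  "oth1 i = (if i = 1 then 2 else 1)"
definition oth2 :: "nat \<Rightarrow> nat" where
  "oth2 i = (if i = 3 then 2 else 3)"

definition sigma :: "(nat \<Rightarrow> real) \<Rightarrow> (nat \<Rightarrow> real) \<Rightarrow> nat \<Rightarrow> real" where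
  "sigma lam F i = lam i - gfun (lam i) (lam (oth1 i)) (F i) (F (oth1 i))
                         - gfun (lam i) (lam (oth2 i)) (F i) (F (oth2 i))"

definition wfun :: "(nat \<Rightarrow> real) \<Rightarrow> (nat \<Rightarrow> real) \<Rightarrow> nat \<Rightarrow> real" where
  "wfun lam F i = sigma lam F i
      + 2 * gfun (lam (oth1 i)) (lam (oth2 i)) (F (oth1 i)) (F (oth2 i))"

definition tau :: "(nat \<Rightarrow> real) \<Rightarrow> (nat \<Rightarrow> real) \<Rightarrow> nat \<Rightarrow> real" where
  "tau lam F l =
     ((sigma lam F l)^2 + 2 * (F l)^2 - 3 * wfun lam F l * sigma lam F l) /
     (2 * (F l)^2 - wfun lam F l * sigma lam F l - (wfun lam F l)^2)"

definition E3 :: "(nat \<Rightarrow> real) \<Rightarrow> (nat \<Rightarrow> real) \<Rightarrow> nat \<Rightarrow> nat \<Rightarrow> nat \<Rightarrow> real" where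
  "E3 lam F i j k =
     (if i = j \<and> j = k then F i * tau lam F i
      else if i \<noteq> j \<and> j \<noteq> k \<and> i \<noteq> k then 0
      else (let l = (if i = j then k else if i = k then j else i)
            in F l / 2 * (1 - tau lam F l)))"

(* The 9x9 matrix J_x, given with 1-based entries *)
definition Jx_entry :: "real \<Rightarrow> real \<Rightarrow> real \<Rightarrow> real \<Rightarrow> nat \<Rightarrow> nat \<Rightarrow> real" where
  "Jx_entry a b c d i j =
     (if (i, j) = (1, 2) \<or> (i, j) = (2, 5) \<or> (i, j) = (3, 6) \<or> (i, j) = (4, 7) then 1
      else if (i, j) = (5, 2) then a
      else if (i, j) = (6, 3) then b
      else if (i, j) = (7, 4) then c
      else if (i, j) = (8, 2) then d
      else 0)"

definition Jx :: "real \<Rightarrow> real \<Rightarrow> real \<Rightarrow> real \<Rightarrow> real mat" where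
  "Jx a b c d = mat 9 9 (\<lambda>(i, j). Jx_entry a b c d (i + 1) (j + 1))"

definition real_diagonalizable :: "real mat \<Rightarrow> bool" where
  "real_diagonalizable A \<longleftrightarrow> (\<exists>D :: real mat. diagonal_mat D \<and> similar_mat A D)"

end

theory Submission
  imports Defs
begin

lemma g00: "x > 0 \<Longrightarrow> y > 0 \<Longrightarrow> gfun x y 0 0 * (3*(x+y)) = 2*x*y"
proof -
  assume "x>0" "y>0" then have "x+y \<noteq> 0" by simp
  then show ?thesis unfolding gfun_def by (simp add: field_simps) (simp add: algebra_simps power2_eq_square)
qed

lemma sig_form: "x>0 \<Longrightarrow> y>0 \<Longrightarrow> z>0 \<Longrightarrow>
  (x - gfun x y 0 0 - gfun x z 0 0) * (3*(x+y)*(x+z)) = x*(3*x^2+x*y+x*z-y*z)"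
proof -
  assume p: "x>0" "y>0" "z>0"
  have "(x - gfun x y 0 0 - gfun x z 0 0) * (3*(x+y)*(x+z)) = x*(3*(x+y)*(x+z))
     - (gfun x y 0 0 * (3*(x+y)))*(x+z) - (gfun x z 0 0 * (3*(x+z)))*(x+y)"
    by (simp add: algebra_simps)
  also have "\<dots> = x*(3*x^2+x*y+x*z-y*z)" unfolding g00[OF p(1) p(2)] g00[OF p(1) p(3)] by (simp add: algebra_simps power2_eq_square)
  finally show ?thesis .
qed

lemma w_form: "x>0 \<Longrightarrow> y>0 \<Longrightarrow> z>0 \<Longrightarrow>
  (x - gfun x y 0 0 - gfun x z 0 0 + 2 * gfun y z 0 0) * (3*(x+y)*(x+z)*(y+z)) =
   (3*x^3*(y+z) + x^2*(y+z)^2 + 4*x^2*y*z + 3*x*y*z*(y+z) + 4*y^2*z^2)"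
proof -
  assume p: "x>0" "y>0" "z>0"
  have "(x - gfun x y 0 0 - gfun x z 0 0 + 2 * gfun y z 0 0) * (3*(x+y)*(x+z)*(y+z)) =
     ((x - gfun x y 0 0 - gfun x z 0 0) * (3*(x+y)*(x+z)))*(y+z) + 2*(gfun y z 0 0*(3*(y+z)))*((x+y)*(x+z))"
    by (simp add: algebra_simps)
  also have "\<dots> = (3*x^3*(y+z) + x^2*(y+z)^2 + 4*x^2*y*z + 3*x*y*z*(y+z) + 4*y^2*z^2)"
    unfolding g00[OF p(2) p(3)] sig_form[OF p] by (simp add: algebra_simps power2_eq_square power3_eq_cube)
  finally show ?thesis .
qed

lemma w_pos: "x>0 \<Longrightarrow> y>0 \<Longrightarrow> z>0 \<Longrightarrow> x - gfun x y 0 0 - gfun x z 0 0 + 2 * gfun y z 0 0 > 0"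
proof -
  assume p: "x>0" "y>0" "z>0"
  have "(x - gfun x y 0 0 - gfun x z 0 0 + 2 * gfun y z 0 0) * (3*(x+y)*(x+z)*(y+z)) > 0"
    unfolding w_form[OF p] using p by (intro add_pos_pos mult_pos_pos, simp_all)
  moreover have "3*(x+y)*(x+z)*(y+z) > 0" using p by simp
  ultimately show ?thesis using zero_less_mult_pos2 by blast
qed

lemma sw_pos: "x>0 \<Longrightarrow> y>0 \<Longrightarrow> z>0 \<Longrightarrow> 2*(x - gfun x y 0 0 - gfun x z 0 0) + 2 * gfun y z 0 0 > 0"
proof -
  assume p: "x>0" "y>0" "z>0"
  have "(2*(x - gfun x y 0 0 - gfun x z 0 0) + 2 * gfun y z 0 0) * (3*(x+y)*(x+z)*(y+z)) =
     2*((x - gfun x y 0 0 - gfun x z 0 0) * (3*(x+y)*(x+z)))*(y+z) + 2*(gfun y z 0 0*(3*(y+z)))*((x+y)*(x+z))"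
    by (simp add: algebra_simps)
  also have "\<dots> = 6*x^3*(y+z)+2*x^2*(y+z)^2 + 2*x*y*z*(y+z) + 4*x^2*y*z + 4*y^2*z^2"
    unfolding g00[OF p(2) p(3)] sig_form[OF p] by (simp add: algebra_simps power2_eq_square power3_eq_cube)
  also have "\<dots> > 0" using p by (intro add_pos_pos mult_pos_pos, simp_all)
  finally have "(2*(x - gfun x y 0 0 - gfun x z 0 0) + 2 * gfun y z 0 0) * (3*(x+y)*(x+z)*(y+z)) > 0" .
  moreover have "3*(x+y)*(x+z)*(y+z) > 0" using p by simp
  ultimately show ?thesis using zero_less_mult_pos2 by blast
qed

lemma pos_mult_iff: "(k::real)>0 \<Longrightarrow> (s>0) = (s*k>0)" by (simp add: zero_less_mult_iff)

lemma sig_sign: "x>0 \<Longrightarrow> y>0 \<Longrightarrow> z>0 \<Longrightarrow> (x - gfun x y 0 0 - gfun x z 0 0 > 0) = (3*x^2+x*(y+z)-y*z > 0)"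
proof -
  assume p: "x>0" "y>0" "z>0"
  have k: "3*(x+y)*(x+z) > 0" using p by simp
  have "(x - gfun x y 0 0 - gfun x z 0 0 > 0) = ((x - gfun x y 0 0 - gfun x z 0 0) * (3*(x+y)*(x+z)) > 0)"
    using k by (rule pos_mult_iff)
  also have "\<dots> = (x*(3*x^2+x*y+x*z-y*z) > 0)" unfolding sig_form[OF p] ..
  also have "\<dots> = (3*x^2+x*(y+z)-y*z > 0)" using p by (simp add: zero_less_mult_iff distrib_left add.assoc)
  finally show ?thesis .
qed

lemma h_pos: "x>0 \<Longrightarrow> y>0 \<Longrightarrow> gfun x y 0 0 > 0" unfolding gfun_def by (simp add: zero_less_mult_iff)


lemma deriv_tg: assumes "isCont g 0" shows "((\<lambda>t. t * g t) has_real_derivative g (0::real)) (at 0)"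
proof -
  have "((\<lambda>y. (y * g y - 0 * g 0) / (y - 0)) \<longlongrightarrow> g 0) (at 0)"
  proof (rule Lim_transform_within[where d=1])
    show "(g \<longlongrightarrow> g 0) (at 0)" using assms isCont_def by blast
  qed auto
  then show ?thesis by (simp add: has_field_derivative_iff)
qed

lemma Fcont: "isCont (\<lambda>t. ((\<lambda>_. 0::real)(i:=t)) k) 0" by (cases "k=i") auto

lemma gcont: "isCont f 0 \<Longrightarrow> isCont g 0 \<Longrightarrow> isCont (\<lambda>t. gfun x y (f t) (g t)) 0"
  unfolding gfun_def by (simp only: divide_inverse) (intro continuous_intros)

lemma sigcont: "isCont (\<lambda>t. sigma lam ((\<lambda>_. 0)(i:=t)) l) 0"
  unfolding sigma_def by (intro continuous_intros gcont Fcont)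

lemma wcont: "isCont (\<lambda>t. wfun lam ((\<lambda>_. 0)(i:=t)) l) 0"
  unfolding wfun_def by (intro continuous_intros gcont Fcont sigcont)

lemma fz[simp]: "((\<lambda>_. 0::real)(i:=0)) = (\<lambda>_. 0)" by auto

lemma taucont: assumes "wfun lam (\<lambda>_. 0) l * sigma lam (\<lambda>_. 0) l + (wfun lam (\<lambda>_. 0) l)^2 \<noteq> 0"
  shows "isCont (\<lambda>t. tau lam ((\<lambda>_. 0)(i:=t)) l) 0"
  unfolding tau_def
  apply (rule isCont_divide)
    apply (intro continuous_intros gcont Fcont sigcont wcont)
   apply (intro continuous_intros gcont Fcont sigcont wcont)
  using assms by (simp add: fz; auto simp: mult.commute add_eq_0_iff)

lemma divpos_iff: "(K::real)>0 \<Longrightarrow> (X/K > 0) = (X > 0)" by (auto simp: zero_less_divide_iff)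
lemma multpos_iff: "(q::real)>0 \<Longrightarrow> (s*q>0) = (s>0)" by (simp add: zero_less_mult_iff)

lemma tau0: "tau lam (\<lambda>_. 0) l = ((sigma lam (\<lambda>_. 0) l)^2 - 3 * wfun lam (\<lambda>_. 0) l * sigma lam (\<lambda>_. 0) l) /
     (- (wfun lam (\<lambda>_. 0) l * sigma lam (\<lambda>_. 0) l) - (wfun lam (\<lambda>_. 0) l)^2)"
  by (simp add: tau_def)

lemma sw_facts:
  fixes s w :: real assumes "w > 0" "s + w > 0" "w > s"
  shows "w*s + w^2 \<noteq> 0" "((s^2 - 3*w*s)/(-(w*s) - w^2) > 0) = (s > 0)"
    "(1 - (s^2 - 3*w*s)/(-(w*s) - w^2))/2 > 0"
proof -
  have d: "w*(s+w) > 0" using assms by simp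
  then show "w*s + w^2 \<noteq> 0" by (simp add: algebra_simps power2_eq_square)
  have e1: "(s^2 - 3*w*s)/(-(w*s) - w^2) = (s*(3*w-s))/(w*(s+w))"
    using d by (simp add: field_simps power2_eq_square; simp add: algebra_simps)
  have "3*w - s > 0" using assms by simp
  then show "((s^2 - 3*w*s)/(-(w*s) - w^2) > 0) = (s > 0)" unfolding e1 divpos_iff[OF d] by (rule multpos_iff)
  have e2: "1 - (s^2 - 3*w*s)/(-(w*s) - w^2) = (w-s)^2/(w*(s+w))"
    using d by (simp add: field_simps power2_eq_square; simp add: algebra_simps)
  show "(1 - (s^2 - 3*w*s)/(-(w*s) - w^2))/2 > 0" unfolding e2 using d assms by simp
qed

lemma sigma0: "sigma lam (\<lambda>_. 0) 1 = lam 1 - gfun (lam 1) (lam 2) 0 0 - gfun (lam 1) (lam 3) 0 0"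
  "sigma lam (\<lambda>_. 0) 2 = lam 2 - gfun (lam 2) (lam 1) 0 0 - gfun (lam 2) (lam 3) 0 0"
  "sigma lam (\<lambda>_. 0) 3 = lam 3 - gfun (lam 3) (lam 1) 0 0 - gfun (lam 3) (lam 2) 0 0"
  by (simp_all add: sigma_def oth1_def oth2_def)

lemma w0: "wfun lam (\<lambda>_. 0) 1 = sigma lam (\<lambda>_. 0) 1 + 2 * gfun (lam 2) (lam 3) 0 0"
  "wfun lam (\<lambda>_. 0) 2 = sigma lam (\<lambda>_. 0) 2 + 2 * gfun (lam 1) (lam 3) 0 0"
  "wfun lam (\<lambda>_. 0) 3 = sigma lam (\<lambda>_. 0) 3 + 2 * gfun (lam 1) (lam 2) 0 0"
  by (simp_all add: wfun_def oth1_def oth2_def)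

lemma analysis:
  fixes lam :: "nat \<Rightarrow> real" and a b c :: real
  assumes p: "lam 1 > 0" "lam 2 > 0" "lam 3 > 0"
    and da: "((\<lambda>t. E3 lam ((\<lambda>_. 0)(1 := t)) 1 1 1) has_real_derivative a) (at 0)"
    and db: "((\<lambda>t. E3 lam ((\<lambda>_. 0)(2 := t)) 1 1 2) has_real_derivative b) (at 0)"
    and dc: "((\<lambda>t. E3 lam ((\<lambda>_. 0)(3 := t)) 1 1 3) has_real_derivative c) (at 0)"
  shows "(a > 0) = (sigma lam (\<lambda>_. 0) 1 > 0)" "b > 0" "c > 0"
proof -
  have fl: "\<And>l. l \<in> {1,2,3} \<Longrightarrow> wfun lam (\<lambda>_. 0) l > 0 \<and> sigma lam (\<lambda>_. 0) l + wfun lam (\<lambda>_. 0) l > 0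
     \<and> wfun lam (\<lambda>_. 0) l > sigma lam (\<lambda>_. 0) l"
  proof -
    fix l :: nat assume "l \<in> {1,2,3}"
    then consider "l = 1" | "l = 2" | "l = 3" by blast
    then show "?thesis l"
    proof cases
      case 1 then show ?thesis unfolding 1 w0 sigma0 using w_pos[of "lam 1" "lam 2" "lam 3"]
        sw_pos[of "lam 1" "lam 2" "lam 3"] h_pos[of "lam 2" "lam 3"] p by simp
    next
      case 2 then show ?thesis unfolding 2 w0 sigma0 using w_pos[of "lam 2" "lam 1" "lam 3"]
        sw_pos[of "lam 2" "lam 1" "lam 3"] h_pos[of "lam 1" "lam 3"] p by simp
    next
      case 3 then show ?thesis unfolding 3 w0 sigma0 using w_pos[of "lam 3" "lam 1" "lam 2"]
        sw_pos[of "lam 3" "lam 1" "lam 2"] h_pos[of "lam 1" "lam 2"] p by simp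
    qed
  qed
  note f1 = sw_facts[OF conjunct1[OF fl] conjunct1[OF conjunct2[OF fl]] conjunct2[OF conjunct2[OF fl]]]
  have c1: "\<And>l i. l \<in> {1,2,3} \<Longrightarrow> isCont (\<lambda>t. tau lam ((\<lambda>_. 0)(i:=t)) l) 0"
    by (rule taucont) (use f1(1) in blast)
  have "((\<lambda>t. E3 lam ((\<lambda>_. 0)(1 := t)) 1 1 1) has_real_derivative tau lam (\<lambda>_. 0) 1) (at 0)"
    using deriv_tg[OF c1[of 1 1]] by (simp add: E3_def)
  then have "a = tau lam (\<lambda>_. 0) 1" using da DERIV_unique by blast
  then show "(a > 0) = (sigma lam (\<lambda>_. 0) 1 > 0)" using f1(2)[of 1] by (simp add: tau0)
  have "((\<lambda>t. E3 lam ((\<lambda>_. 0)(2 := t)) 1 1 2) has_real_derivative (1 - tau lam (\<lambda>_. 0) 2)/2) (at 0)"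
    using deriv_tg[of "\<lambda>t. (1 - tau lam ((\<lambda>_. 0)(2:=t)) 2)/2"] c1[of 2 2]
    by (simp add: E3_def continuous_intros mult.commute)
  then have "b = (1 - tau lam (\<lambda>_. 0) 2)/2" using db DERIV_unique by blast
  then show "b > 0" using f1(3)[of 2] by (simp add: tau0)
  have "((\<lambda>t. E3 lam ((\<lambda>_. 0)(3 := t)) 1 1 3) has_real_derivative (1 - tau lam (\<lambda>_. 0) 3)/2) (at 0)"
    using deriv_tg[of "\<lambda>t. (1 - tau lam ((\<lambda>_. 0)(3:=t)) 3)/2"] c1[of 3 3]
    by (simp add: E3_def continuous_intros mult.commute)
  then have "c = (1 - tau lam (\<lambda>_. 0) 3)/2" using dc DERIV_unique by blast
  then show "c > 0" using f1(3)[of 3] by (simp add: tau0)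
qed


lemma sum9: "sum f {0..<9::nat} = f 0 + f 1 + f 2 + f 3 + f 4 + f 5 + f 6 + f 7 + f 8"
  by (simp add: eval_nat_numeral)

lemma less9: "(i::nat) < 9 \<Longrightarrow> i = 0 \<or> i = 1 \<or> i = 2 \<or> i = 3 \<or> i = 4 \<or> i = 5 \<or> i = 6 \<or> i = 7 \<or> i = 8"
  by auto

definition Pm :: "real \<Rightarrow> real \<Rightarrow> real \<Rightarrow> real \<Rightarrow> real mat" where
  "Pm s r q d = mat 9 9 (\<lambda>(i,j).
     if (i,j) = (0,0) then 1/s else if (i,j) = (1,0) then 1 else if (i,j) = (4,0) then s
     else if (i,j) = (7,0) then d/s
     else if (i,j) = (0,1) then -1/s else if (i,j) = (1,1) then 1 else if (i,j) = (4,1) then -s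
     else if (i,j) = (7,1) then -d/s
     else if (i,j) = (0,2) then 1 else if (i,j) = (7,3) then 1
     else if (i,j) = (2,4) then 1 else if (i,j) = (5,4) then r
     else if (i,j) = (2,5) then 1 else if (i,j) = (5,5) then -r
     else if (i,j) = (3,6) then 1 else if (i,j) = (6,6) then q
     else if (i,j) = (3,7) then 1 else if (i,j) = (6,7) then -q
     else if (i,j) = (8,8) then 1 else 0)"

definition Qm :: "real \<Rightarrow> real \<Rightarrow> real \<Rightarrow> real \<Rightarrow> real mat" where
  "Qm s r q d = mat 9 9 (\<lambda>(i,j).
     if (i,j) = (0,1) then 1/2 else if (i,j) = (0,4) then 1/(2*s)
     else if (i,j) = (1,1) then 1/2 else if (i,j) = (1,4) then -1/(2*s)
     else if (i,j) = (2,0) then 1 else if (i,j) = (2,4) then -1/(s*s)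
     else if (i,j) = (3,7) then 1 else if (i,j) = (3,4) then -d/(s*s)
     else if (i,j) = (4,2) then 1/2 else if (i,j) = (4,5) then 1/(2*r)
     else if (i,j) = (5,2) then 1/2 else if (i,j) = (5,5) then -1/(2*r)
     else if (i,j) = (6,3) then 1/2 else if (i,j) = (6,6) then 1/(2*q)
     else if (i,j) = (7,3) then 1/2 else if (i,j) = (7,6) then -1/(2*q)
     else if (i,j) = (8,8) then 1 else 0)"

definition Dm :: "real \<Rightarrow> real \<Rightarrow> real \<Rightarrow> real mat" where
  "Dm s r q = mat 9 9 (\<lambda>(i,j). if i = j then
     (if i = 0 then s else if i = 1 then -s else if i = 4 then r else if i = 5 then -r
      else if i = 6 then q else if i = 7 then -q else 0) else 0)"

lemma PQ: assumes "s \<noteq> 0" "r \<noteq> 0" "q \<noteq> 0" shows "Pm s r q d * Qm s r q d = 1\<^sub>m 9"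
proof (rule eq_matI)
  fix i j assume "i < dim_row (1\<^sub>m 9 :: real mat)" "j < dim_col (1\<^sub>m 9 :: real mat)"
  then have "i < 9" "j < 9" by auto
  then show "(Pm s r q d * Qm s r q d) $$ (i, j) = 1\<^sub>m 9 $$ (i, j)"
    using less9[OF \<open>i<9\<close>] less9[OF \<open>j<9\<close>]
    apply (elim disjE)
    by (simp_all add: Pm_def Qm_def scalar_prod_def sum9 assms)
qed (auto simp: Pm_def Qm_def)

lemma QP: assumes "s \<noteq> 0" "r \<noteq> 0" "q \<noteq> 0" shows "Qm s r q d * Pm s r q d = 1\<^sub>m 9"
proof (rule eq_matI)
  fix i j assume "i < dim_row (1\<^sub>m 9 :: real mat)" "j < dim_col (1\<^sub>m 9 :: real mat)"
  then have "i < 9" "j < 9" by auto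
  then show "(Qm s r q d * Pm s r q d) $$ (i, j) = 1\<^sub>m 9 $$ (i, j)"
    using less9[OF \<open>i<9\<close>] less9[OF \<open>j<9\<close>]
    apply (elim disjE)
    by (simp_all add: Pm_def Qm_def scalar_prod_def sum9 assms)
qed (auto simp: Pm_def Qm_def)

lemma JP: assumes "s \<noteq> 0" "r \<noteq> 0" "q \<noteq> 0"
  shows "Jx (s*s) (r*r) (q*q) d * Pm s r q d = Pm s r q d * Dm s r q"
proof (rule eq_matI)
  fix i j assume "i < dim_row (Pm s r q d * Dm s r q)" "j < dim_col (Pm s r q d * Dm s r q)"
  then have "i < 9" "j < 9" by (auto simp: Pm_def Dm_def)
  then show "(Jx (s*s) (r*r) (q*q) d * Pm s r q d) $$ (i, j) = (Pm s r q d * Dm s r q) $$ (i, j)"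
    using less9[OF \<open>i<9\<close>] less9[OF \<open>j<9\<close>]
    apply (elim disjE)
    by (simp_all add: Pm_def Dm_def Jx_def Jx_entry_def scalar_prod_def sum9 assms)
qed (auto simp: Pm_def Dm_def Jx_def)

lemma diag_pos: assumes "s \<noteq> 0" "r \<noteq> 0" "q \<noteq> 0"
  shows "real_diagonalizable (Jx (s*s) (r*r) (q*q) d)"
proof -
  let ?J = "Jx (s*s) (r*r) (q*q) d" and ?P = "Pm s r q d" and ?Q = "Qm s r q d" and ?D = "Dm s r q"
  have c: "?J \<in> carrier_mat 9 9" "?P \<in> carrier_mat 9 9" "?Q \<in> carrier_mat 9 9" "?D \<in> carrier_mat 9 9"
    by (auto simp: Jx_def Pm_def Qm_def Dm_def)
  have "?J = ?J * (?P * ?Q)" using PQ[OF assms] c by simp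
  also have "\<dots> = (?J * ?P) * ?Q" using c by (simp add: assoc_mult_mat)
  also have "\<dots> = ?P * ?D * ?Q" by (simp add: JP[OF assms])
  finally have e: "?J = ?P * ?D * ?Q" .
  have "similar_mat ?J ?D" unfolding similar_mat_def similar_mat_wit_def Let_def
    using c e PQ[OF assms] QP[OF assms] by (intro exI[of _ ?P] exI[of _ ?Q]) (auto simp: Jx_def)
  moreover have "diagonal_mat ?D" by (auto simp: diagonal_mat_def Dm_def)
  ultimately show ?thesis unfolding real_diagonalizable_def by blast
qed


lemma diag_vec: assumes "diagonal_mat D" "D \<in> carrier_mat n n" "v \<in> carrier_vec n" "i < n"
  shows "(D *\<^sub>v v) $ i = D $$ (i,i) * v $ i"
proof -
  have "(D *\<^sub>v v) $ i = (\<Sum>j\<in>{0..<n}. D $$ (i,j) * v $ j)"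
    using assms by (simp add: scalar_prod_def)
  also have "\<dots> = (\<Sum>j\<in>{0..<n}. if j = i then D $$ (i,i) * v $ i else 0)"
    using assms(1,2,4) by (intro sum.cong) (auto simp: diagonal_mat_def)
  also have "\<dots> = D $$ (i,i) * v $ i" using assms(4) by simp
  finally show ?thesis .
qed

lemma diag_neg: assumes "real_diagonalizable (Jx a b c d)" shows "a > 0"
proof (rule ccontr)
  assume na: "\<not> a > 0"
  let ?J = "Jx a b c d"
  obtain D where dD: "diagonal_mat D" and sD: "similar_mat ?J D"
    using assms unfolding real_diagonalizable_def by blast
  from similar_matD[OF sD] obtain n P Q where
    c: "{?J, D, P, Q} \<subseteq> carrier_mat n n" and PQ: "P * Q = 1\<^sub>m n" and QP: "Q * P = 1\<^sub>m n"
    and JE: "?J = P * D * Q" by blast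
  have n: "n = 9" using c by (auto simp: Jx_def)
  have cJ: "?J \<in> carrier_mat 9 9" and cD: "D \<in> carrier_mat 9 9" and cP: "P \<in> carrier_mat 9 9"
    and cQ: "Q \<in> carrier_mat 9 9" using c n by auto
  define e :: "real vec" where "e = unit_vec 9 1"
  have ce: "e \<in> carrier_vec 9" by (simp add: e_def)
  define u :: "real vec" where "u = vec 9 (\<lambda>i. if i = 0 then 1 else if i = 4 then a else if i = 7 then d else 0)"
  have Je: "?J *\<^sub>v e = u"
  proof (rule eq_vecI)
    fix i assume "i < dim_vec u" then have "i < 9" by (simp add: u_def)
    then show "(?J *\<^sub>v e) $ i = u $ i"
      using less9[OF \<open>i<9\<close>] apply (elim disjE)
      by (simp_all add: Jx_def Jx_entry_def e_def u_def scalar_prod_def sum9)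
  qed (simp add: u_def Jx_def)
  have Ju: "?J *\<^sub>v u = a \<cdot>\<^sub>v e"
  proof (rule eq_vecI)
    fix i assume "i < dim_vec (a \<cdot>\<^sub>v e)" then have "i < 9" by (simp add: e_def)
    then show "(?J *\<^sub>v u) $ i = (a \<cdot>\<^sub>v e) $ i"
      using less9[OF \<open>i<9\<close>] apply (elim disjE)
      by (simp_all add: Jx_def Jx_entry_def e_def u_def scalar_prod_def sum9)
  qed (simp add: e_def Jx_def)
  have Jv: "?J *\<^sub>v x = P *\<^sub>v (D *\<^sub>v (Q *\<^sub>v x))" if "x \<in> carrier_vec 9" for x
  proof -
    have "?J *\<^sub>v x = (P * D * Q) *\<^sub>v x" using JE by simp
    also have "\<dots> = P *\<^sub>v (D *\<^sub>v (Q *\<^sub>v x))" using cD cP cQ that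
      by (simp add: assoc_mult_mat_vec[of _ 9 9 _ 9])
    finally show ?thesis .
  qed
  have QPv: "Q *\<^sub>v (P *\<^sub>v x) = x" if "x \<in> carrier_vec 9" for x
  proof -
    have "Q *\<^sub>v (P *\<^sub>v x) = (Q * P) *\<^sub>v x" using cP cQ that by (simp add: assoc_mult_mat_vec[of _ 9 9 _ 9])
    then show ?thesis using QP n that by simp
  qed
  define w where "w = Q *\<^sub>v e"
  have cw: "w \<in> carrier_vec 9" using cQ ce by (simp add: w_def)
  have Pw: "P *\<^sub>v w = e"
  proof -
    have "P *\<^sub>v w = (P * Q) *\<^sub>v e" using cP cQ ce by (simp add: w_def assoc_mult_mat_vec[of _ 9 9 _ 9])
    then show ?thesis using PQ n ce by simp
  qed
  have cDw: "D *\<^sub>v w \<in> carrier_vec 9" using cD cw by simp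
  have "a \<cdot>\<^sub>v e = ?J *\<^sub>v (?J *\<^sub>v e)" using Je Ju by simp
  also have "\<dots> = P *\<^sub>v (D *\<^sub>v (D *\<^sub>v w))"
  proof -
    have "?J *\<^sub>v e = P *\<^sub>v (D *\<^sub>v w)" using Jv[OF ce] w_def by simp
    moreover have "P *\<^sub>v (D *\<^sub>v w) \<in> carrier_vec 9" using cP cDw by simp
    ultimately show ?thesis using Jv QPv cDw cD by simp
  qed
  finally have "Q *\<^sub>v (a \<cdot>\<^sub>v e) = Q *\<^sub>v (P *\<^sub>v (D *\<^sub>v (D *\<^sub>v w)))" by simp
  also have "\<dots> = D *\<^sub>v (D *\<^sub>v w)" using QPv cD cDw by simp
  finally have DDw: "D *\<^sub>v (D *\<^sub>v w) = a \<cdot>\<^sub>v w" using mult_mat_vec[OF cQ ce] w_def by simp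
  have Dw0: "D *\<^sub>v w = 0\<^sub>v 9"
  proof (rule eq_vecI)
    fix i assume "i < dim_vec (0\<^sub>v 9 :: real vec)" then have i: "i < 9" by simp
    have "(D *\<^sub>v (D *\<^sub>v w)) $ i = (a \<cdot>\<^sub>v w) $ i" using DDw by simp
    then have "D $$ (i,i) * (D $$ (i,i) * w $ i) = a * w $ i"
      using diag_vec[OF dD cD cDw i] diag_vec[OF dD cD cw i] i cw by simp
    then have "D $$ (i,i) * w $ i = 0" using na
      by (metis mult.assoc mult_eq_0_iff mult_le_0_iff not_less zero_le_square mult_right_cancel
           antisym less_eq_real_def)
    then show "(D *\<^sub>v w) $ i = 0\<^sub>v 9 $ i" using diag_vec[OF dD cD cw i] i by simp
  qed (use cD in simp)
  have "?J *\<^sub>v e = P *\<^sub>v (0\<^sub>v 9)" using Jv[OF ce] w_def Dw0 by simp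
  then have "(?J *\<^sub>v e) $ 0 = 0" using cP by (auto simp: scalar_prod_def intro!: sum.neutral)
  moreover have "(?J *\<^sub>v e) $ 0 = 1" using Je by (simp add: u_def)
  ultimately show False by simp
qed


theorem mainTheorem13:
  fixes lam :: "nat \<Rightarrow> real" and a b c d :: real
  assumes "lam 1 > 0" and "lam 2 > 0" and "lam 3 > 0"
    and "((\<lambda>t. E3 lam ((\<lambda>_. 0)(1 := t)) 1 1 1) has_real_derivative a) (at 0)"
    and "((\<lambda>t. E3 lam ((\<lambda>_. 0)(2 := t)) 1 1 2) has_real_derivative b) (at 0)"
    and "((\<lambda>t. E3 lam ((\<lambda>_. 0)(3 := t)) 1 1 3) has_real_derivative c) (at 0)"
    and "((\<lambda>t. E3 lam ((\<lambda>_. 0)(1 := t)) 1 2 2) has_real_derivative d) (at 0)"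
  shows "(real_diagonalizable (Jx a b c d) \<longleftrightarrow> sigma lam (\<lambda>_. 0) 1 > 0)
       \<and> (sigma lam (\<lambda>_. 0) 1 > 0 \<longleftrightarrow>
            3 * (lam 1)^2 + lam 1 * (lam 2 + lam 3) - lam 2 * lam 3 > 0)"
proof
  note an = analysis[OF assms(1-6)]
  show "real_diagonalizable (Jx a b c d) \<longleftrightarrow> sigma lam (\<lambda>_. 0) 1 > 0"
  proof
    assume "real_diagonalizable (Jx a b c d)"
    then show "sigma lam (\<lambda>_. 0) 1 > 0" using diag_neg an(1) by blast
  next
    assume "sigma lam (\<lambda>_. 0) 1 > 0"
    then have ap: "a > 0" using an(1) by simp
    have "Jx a b c d = Jx (sqrt a * sqrt a) (sqrt b * sqrt b) (sqrt c * sqrt c) d"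
      using ap an(2,3) by simp
    moreover have "real_diagonalizable (Jx (sqrt a * sqrt a) (sqrt b * sqrt b) (sqrt c * sqrt c) d)"
      using ap an(2,3) by (intro diag_pos) auto
    ultimately show "real_diagonalizable (Jx a b c d)" by simp
  qed
  show "sigma lam (\<lambda>_. 0) 1 > 0 \<longleftrightarrow>
            3 * (lam 1)^2 + lam 1 * (lam 2 + lam 3) - lam 2 * lam 3 > 0"
    unfolding sigma0 using sig_sign[OF assms(1-3)] .
qed

end
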